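(* Let $b$ be a positive integer, let $p$ be an odd prime not dividing $b$, and let $T$ be the set of all integers of the form $p^k b'$ with $k\in\mathbb N$ and $b'$ an odd positive divisor of $b^n$ for some $n$. If $f,g\in\mathcal R_b$ satisfy $\mathrm{ev}_\xi(f)=\mathrm{ev}_\xi(g)$ for every root of unity $\xi$ whose order lies in $T$, then $f=g$.
   Context: $(q;q^2)_k=(1-q)(1-q^3)\cdots(1-q^{2k-1})$ and $\mathcal R_b=\varprojlim_k \mathbb Z[1/b][q]/((q;q^2)_k)$. For $f\in\mathcal R_b$ and a root of unity $\xi$ of odd order, $\mathrm{ev}_\xi(f)\in\mathbb Z[1/b][\xi]$ is obtained by substituting $q=\xi$ (well defined since the image of $(q;q^2)_k$ vanishes at $\xi$ for $k$ large). $\mathbb N=\{1,2,3,\dots\}$. *)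

theory Defs
  imports Complex_Main "HOL-Computational_Algebra.Polynomial"
begin

definition Zinv :: "nat \<Rightarrow> rat set" where
  "Zinv b = {x. \<exists>(z::int) (n::nat). x = of_int z / of_nat (b ^ n)}"

definition Zinv_poly :: "nat \<Rightarrow> rat poly \<Rightarrow> bool" where
  "Zinv_poly b P \<longleftrightarrow> (\<forall>i. coeff P i \<in> Zinv b)"

definition Zinv_dvd :: "nat \<Rightarrow> rat poly \<Rightarrow> rat poly \<Rightarrow> bool" where
  "Zinv_dvd b D P \<longleftrightarrow> (\<exists>H. Zinv_poly b H \<and> P = D * H)"

definition qpoch :: "nat \<Rightarrow> rat poly" where
  "qpoch k = (\<Prod>i<k. 1 - monom 1 (2 * i + 1))"

text \<open>Elements of R_b = lim_k Z[1/b][q]/((q;q^2)_k), represented as compatible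
  sequences of representatives: f k represents the image in Z[1/b][q]/((q;q^2)_k).\<close>
definition in_Rb :: "nat \<Rightarrow> (nat \<Rightarrow> rat poly) \<Rightarrow> bool" where
  "in_Rb b f \<longleftrightarrow> (\<forall>k. Zinv_poly b (f k)) \<and>
                  (\<forall>k. Zinv_dvd b (qpoch k) (f (Suc k) - f k))"

definition Rb_eq :: "nat \<Rightarrow> (nat \<Rightarrow> rat poly) \<Rightarrow> (nat \<Rightarrow> rat poly) \<Rightarrow> bool" where
  "Rb_eq b f g \<longleftrightarrow> (\<forall>k. Zinv_dvd b (qpoch k) (f k - g k))"

definition root_of_unity_order :: "complex \<Rightarrow> nat \<Rightarrow> bool" where
  "root_of_unity_order \<xi> m \<longleftrightarrow> m > 0 \<and> \<xi> ^ m = 1 \<and> (\<forall>j. 0 < j \<and> j < m \<longrightarrow> \<xi> ^ j \<noteq> 1)"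

text \<open>ev_xi(f) for xi of odd order m: substitute q = xi into the representative at level m
  (since 2m-1 \<ge> m, (q;q^2)_m vanishes at xi, so this is the stable value).\<close>
definition ev :: "complex \<Rightarrow> nat \<Rightarrow> (nat \<Rightarrow> rat poly) \<Rightarrow> complex" where
  "ev \<xi> m f = poly (map_poly of_rat (f m)) \<xi>"

definition Tset :: "nat \<Rightarrow> nat \<Rightarrow> nat set" where
  "Tset b p = {p ^ k * b' | k b'. k \<ge> 1 \<and> odd b' \<and> b' > 0 \<and> (\<exists>n. b' dvd b ^ n)}"

end

theory Submission
  imports Defs "HOL-Computational_Algebra.Fundamental_Theorem_Algebra"
begin



lemma Zinv_of_int[simp]: "of_int z \<in> Zinv b"
  unfolding Zinv_def by (rule CollectI, rule exI[of _ z], rule exI[of _ 0]) simp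

lemma Zinv_0[simp]: "0 \<in> Zinv b" using Zinv_of_int[of 0 b] by simp
lemma Zinv_1[simp]: "1 \<in> Zinv b" using Zinv_of_int[of 1 b] by simp
lemma Zinv_of_nat[simp]: "of_nat n \<in> Zinv b" using Zinv_of_int[of "int n" b] by simp

lemma Zinv_add:
  assumes "b > 0" "x \<in> Zinv b" "y \<in> Zinv b" shows "x + y \<in> Zinv b"
proof -
  obtain z n where x: "x = of_int z / of_nat (b ^ n)" using assms(2) unfolding Zinv_def by blast
  obtain w m where y: "y = of_int w / of_nat (b ^ m)" using assms(3) unfolding Zinv_def by blast
  have "x + y = of_int (z * int b ^ m + w * int b ^ n) / of_nat (b ^ (n + m))"
    using assms(1) by (simp add: x y field_simps power_add)
  then show ?thesis unfolding Zinv_def by blast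
qed

lemma Zinv_mult:
  assumes "x \<in> Zinv b" "y \<in> Zinv b" shows "x * y \<in> Zinv b"
proof -
  obtain z n where x: "x = of_int z / of_nat (b ^ n)" using assms(1) unfolding Zinv_def by blast
  obtain w m where y: "y = of_int w / of_nat (b ^ m)" using assms(2) unfolding Zinv_def by blast
  have "x * y = of_int (z * w) / of_nat (b ^ (n + m))"
    by (simp add: x y power_add)
  then show ?thesis unfolding Zinv_def by blast
qed

lemma Zinv_uminus:
  assumes "x \<in> Zinv b" shows "- x \<in> Zinv b"
  using Zinv_mult[OF Zinv_of_int[of "-1"] assms] by simp

lemma Zinv_diff:
  assumes "b > 0" "x \<in> Zinv b" "y \<in> Zinv b" shows "x - y \<in> Zinv b"
  using Zinv_add[OF assms(1,2) Zinv_uminus[OF assms(3)]] by simp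

lemma Zinv_sum:
  assumes "b > 0" "\<And>i. i \<in> I \<Longrightarrow> f i \<in> Zinv b" shows "sum f I \<in> Zinv b"
  using assms(2) by (induction I rule: infinite_finite_induct) (auto intro: Zinv_add[OF assms(1)])

lemma Zinv_prod:
  assumes "\<And>i. i \<in> I \<Longrightarrow> f i \<in> Zinv b" shows "prod f I \<in> Zinv b"
  using assms by (induction I rule: infinite_finite_induct) (auto intro: Zinv_mult)

lemma Zinv_poly_add: "b > 0 \<Longrightarrow> Zinv_poly b P \<Longrightarrow> Zinv_poly b Q \<Longrightarrow> Zinv_poly b (P + Q)"
  unfolding Zinv_poly_def by (auto intro: Zinv_add)
lemma Zinv_poly_diff: "b > 0 \<Longrightarrow> Zinv_poly b P \<Longrightarrow> Zinv_poly b Q \<Longrightarrow> Zinv_poly b (P - Q)"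
  unfolding Zinv_poly_def by (auto intro: Zinv_diff)
lemma Zinv_poly_uminus: "Zinv_poly b P \<Longrightarrow> Zinv_poly b (- P)"
  unfolding Zinv_poly_def by (auto intro: Zinv_uminus)
lemma Zinv_poly_mult: "b > 0 \<Longrightarrow> Zinv_poly b P \<Longrightarrow> Zinv_poly b Q \<Longrightarrow> Zinv_poly b (P * Q)"
  unfolding Zinv_poly_def coeff_mult by (auto intro!: Zinv_sum Zinv_mult)
lemma Zinv_poly_0[simp]: "Zinv_poly b 0" unfolding Zinv_poly_def by simp
lemma Zinv_poly_1[simp]: "Zinv_poly b 1" unfolding Zinv_poly_def by (simp add: coeff_1)
lemma Zinv_poly_monom[simp]: "Zinv_poly b (monom 1 n)" unfolding Zinv_poly_def by (simp add: coeff_monom)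
lemma Zinv_poly_monom': "c \<in> Zinv b \<Longrightarrow> Zinv_poly b (monom c n)" unfolding Zinv_poly_def by (simp add: coeff_monom)
lemma Zinv_poly_smult: "c \<in> Zinv b \<Longrightarrow> Zinv_poly b P \<Longrightarrow> Zinv_poly b (smult c P)"
  unfolding Zinv_poly_def by (auto intro: Zinv_mult)
lemma Zinv_poly_smult_nat[simp]: "Zinv_poly b P \<Longrightarrow> Zinv_poly b (smult (of_nat c) P)"
  by (simp add: Zinv_poly_smult)
lemma Zinv_poly_power: "b > 0 \<Longrightarrow> Zinv_poly b P \<Longrightarrow> Zinv_poly b (P ^ n)"
  by (induction n) (auto intro: Zinv_poly_mult)
lemma Zinv_poly_sum:
  assumes "b > 0" "\<And>i. i \<in> I \<Longrightarrow> Zinv_poly b (f i)" shows "Zinv_poly b (sum f I)"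
  using assms(2) by (induction I rule: infinite_finite_induct) (auto intro: Zinv_poly_add[OF assms(1)])
lemma Zinv_poly_prod:
  assumes "b > 0" "\<And>i. i \<in> I \<Longrightarrow> Zinv_poly b (f i)" shows "Zinv_poly b (prod f I)"
  using assms(2) by (induction I rule: infinite_finite_induct) (auto intro: Zinv_poly_mult[OF assms(1)])
lemma Zinv_poly_of_nat[simp]: "Zinv_poly b (of_nat n)"
  unfolding Zinv_poly_def by (simp add: of_nat_poly coeff_pCons split: nat.split)

lemmas Zp = Zinv_poly_add Zinv_poly_diff Zinv_poly_uminus Zinv_poly_mult Zinv_poly_power
  Zinv_poly_sum Zinv_poly_prod Zinv_poly_smult_nat

lemma qpoch_Z: "b > 0 \<Longrightarrow> Zinv_poly b (qpoch k)"
  unfolding qpoch_def by (intro Zp) auto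

lemma const_div:
  assumes b: "b > 0" and D: "Zinv_poly b D" "coeff D 0 = 1" and DH: "Zinv_poly b (D * H)"
  shows "Zinv_poly b H"
proof -
  have "\<forall>m<n. coeff H m \<in> Zinv b" for n
  proof (induction n)
    case 0 then show ?case by simp
  next
    case (Suc n)
    have "coeff (D * H) n = (\<Sum>i\<le>n. coeff D i * coeff H (n - i))" by (rule coeff_mult)
    also have "\<dots> = coeff D 0 * coeff H (n - 0) + (\<Sum>i\<in>{1..n}. coeff D i * coeff H (n - i))"
    proof -
      have "{..n} = insert 0 {1..n}" by auto
      then show ?thesis by (simp add: sum.insert)
    qed
    finally have eq: "coeff H n = coeff (D * H) n - (\<Sum>i\<in>{1..n}. coeff D i * coeff H (n - i))"
      using D(2) by simp
    have "coeff H n \<in> Zinv b"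
      unfolding eq using DH D(1) Suc.IH unfolding Zinv_poly_def
      by (intro Zinv_diff[OF b] Zinv_sum[OF b] Zinv_mult) auto
    then show ?case using Suc.IH less_Suc_eq by auto
  qed
  then show ?thesis unfolding Zinv_poly_def by blast
qed

lemma const_dvd:
  assumes b: "b > 0" and D: "Zinv_poly b D" "coeff D 0 = 1" and P: "Zinv_poly b P" and dv: "D dvd P"
  shows "Zinv_dvd b D P"
proof -
  obtain H where "P = D * H" using dv by blast
  then show ?thesis unfolding Zinv_dvd_def using const_div[OF b D] P by auto
qed




lemma Zinv_padic:
  assumes b: "b > 0" and p: "prime p" "\<not> p dvd b" and r: "r \<in> Zinv b"
    and all: "\<forall>t. \<exists>s\<in>Zinv b. r = of_nat (p ^ t) * s"
  shows "r = 0"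
proof -
  obtain z n where rz: "r = of_int z / of_nat (b ^ n)" using r unfolding Zinv_def by blast
  have p1: "p > 1" using p prime_gt_1_nat by blast
  have "nat \<bar>z\<bar> < p ^ nat \<bar>z\<bar>"
    using less_exp[of "nat \<bar>z\<bar>"] power_mono[of 2 p "nat \<bar>z\<bar>"] p1 by linarith
  then obtain t where t: "nat \<bar>z\<bar> < p ^ t" by blast
  obtain s where s: "s \<in> Zinv b" "r = of_nat (p ^ t) * s" using all by blast
  obtain w m where sw: "s = of_int w / of_nat (b ^ m)" using s(1) unfolding Zinv_def by blast
  have "of_int z / of_nat (b ^ n) = (of_nat (p ^ t) * of_int w / of_nat (b ^ m) :: rat)"
    using s(2) rz sw by simp
  then have "(of_int (z * int b ^ m) :: rat) = of_int (int p ^ t * w * int b ^ n)"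
    using b by (simp add: field_simps)
  then have eq: "z * int b ^ m = int p ^ t * w * int b ^ n" by (simp only: of_int_eq_iff)
  have "int p ^ t dvd z * int b ^ m" unfolding eq by simp
  moreover have "coprime (int p ^ t) (int b ^ m)"
    using p by (simp add: prime_imp_coprime_nat coprime_power_left_iff coprime_power_right_iff)
  ultimately have "int p ^ t dvd z" using coprime_dvd_mult_left_iff by blast
  then have "z = 0 \<or> int p ^ t \<le> \<bar>z\<bar>" using dvd_imp_le_int by force
  moreover have "\<bar>z\<bar> < int p ^ t" using t by (metis int_nat_eq abs_ge_zero of_nat_less_iff of_nat_power)
  ultimately have "z = 0" by linarith
  then show ?thesis using rz by simp
qed




definition low :: "rat poly \<Rightarrow> rat poly \<Rightarrow> bool" where
  "low D R \<longleftrightarrow> (\<forall>n\<ge>degree D. coeff R n = 0)"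

lemma zdiv:
  assumes b: "b > 0" and D: "Zinv_poly b D" "lead_coeff D = 1 \<or> lead_coeff D = -1"
    and P: "Zinv_poly b P"
  shows "\<exists>X R. Zinv_poly b X \<and> Zinv_poly b R \<and> P = D * X + R \<and> low D R"
  using P
proof (induction "degree P" arbitrary: P rule: less_induct)
  case less
  show ?case
  proof (cases "low D P")
    case True
    then show ?thesis using less.prems by (intro exI[of _ 0] exI[of _ P]) auto
  next
    case False
    then obtain n where n: "n \<ge> degree D" "coeff P n \<noteq> 0" unfolding low_def by auto
    then have dP: "degree P \<ge> degree D" using le_degree order.trans by blast
    have D0: "D \<noteq> 0" using D(2) by auto
    define c where "c = lead_coeff P * lead_coeff D"
    define P' where "P' = P - monom c (degree P - degree D) * D"
    have cZ: "c \<in> Zinv b" unfolding c_def using less.prems D(1) unfolding Zinv_poly_def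
      by (intro Zinv_mult) auto
    have P'Z: "Zinv_poly b P'" unfolding P'_def
      using less.prems D(1) cZ by (intro Zinv_poly_diff Zinv_poly_mult b Zinv_poly_monom') auto
    have lcD2: "lead_coeff D * lead_coeff D = 1" using D(2) by auto
    have degm: "degree (monom c (degree P - degree D) * D) \<le> degree P"
    proof -
      have "degree (monom c (degree P - degree D) * D) \<le> degree (monom c (degree P - degree D)) + degree D"
        by (rule degree_mult_le)
      also have "\<dots> \<le> (degree P - degree D) + degree D" using degree_monom_le by (intro add_mono) auto
      finally show ?thesis using dP by simp
    qed
    have cm: "coeff (monom c (degree P - degree D) * D) (degree P) = lead_coeff P"
    proof -
      have "coeff (monom c (degree P - degree D) * D) (degree P) = c * lead_coeff D"
        using dP by (simp add: coeff_monom_mult)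
      then show ?thesis using dP lcD2 unfolding c_def by (simp add: mult.assoc)
    qed
    have high: "coeff P' m = 0" if "m \<ge> degree P" for m
    proof (cases "m = degree P")
      case True then show ?thesis unfolding P'_def using cm by simp
    next
      case False
      then have "m > degree P" using that by simp
      then show ?thesis unfolding P'_def using degm
        by (simp add: coeff_eq_0)
    qed
    have "P' = 0 \<or> degree P' < degree P"
    proof (cases "P' = 0")
      case False
      have "degree P' \<le> degree P"
        using high by (intro degree_le) auto
      moreover have "degree P' \<noteq> degree P" using high[of "degree P'"] False by auto
      ultimately show ?thesis by simp
    qed simp
    then obtain X R where XR: "Zinv_poly b X" "Zinv_poly b R" "P' = D * X + R" "low D R"
    proof
      assume "P' = 0" then show ?thesis using that[of 0 0] unfolding low_def by simp
    next
      assume "degree P' < degree P" then show ?thesis using less.hyps P'Z that by blast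
    qed
    have "P = D * (X + monom c (degree P - degree D)) + R"
      using XR(3) unfolding P'_def by (simp add: algebra_simps)
    then show ?thesis using XR cZ by (intro exI[of _ "X + monom c (degree P - degree D)"] exI[of _ R])
        (auto intro: Zinv_poly_add b Zinv_poly_monom')
  qed
qed




lemma low_mult_zero:
  assumes "D \<noteq> 0" "low D (D * K)" shows "K = 0"
proof (rule ccontr)
  assume K: "K \<noteq> 0"
  have "coeff (D * K) (degree D + degree K) = lead_coeff D * lead_coeff K"
    by (simp add: coeff_mult_degree_sum)
  also have "\<dots> \<noteq> 0" using assms K by simp
  finally show False using assms(2) unfolding low_def by auto
qed

lemma separation:
  assumes b: "b > 0" and p: "prime p" "\<not> p dvd b"
    and D: "Zinv_poly b D" "lead_coeff D = 1 \<or> lead_coeff D = -1"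
    and P: "Zinv_poly b P"
    and all: "\<And>t. \<exists>X Y. Zinv_poly b X \<and> Zinv_poly b Y \<and> P = D * X + smult (of_nat (p ^ t)) Y"
  shows "Zinv_dvd b D P"
proof -
  have D0: "D \<noteq> 0" using D(2) by auto
  obtain X0 R where XR: "Zinv_poly b X0" "Zinv_poly b R" "P = D * X0 + R" "low D R"
    using zdiv[OF b D P] by blast
  have "\<exists>R'. Zinv_poly b R' \<and> R = smult (of_nat (p ^ t)) R'" for t
  proof -
    obtain X Y where XY: "Zinv_poly b X" "Zinv_poly b Y" "P = D * X + smult (of_nat (p ^ t)) Y"
      using all by blast
    obtain Z R' where ZR: "Zinv_poly b Z" "Zinv_poly b R'" "Y = D * Z + R'" "low D R'"
      using zdiv[OF b D XY(2)] by blast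
    have "R - smult (of_nat (p ^ t)) R' = D * (X + smult (of_nat (p ^ t)) Z - X0)"
      using XR(3) XY(3) ZR(3) by (simp add: algebra_simps smult_add_right)
    moreover have "low D (R - smult (of_nat (p ^ t)) R')" using XR(4) ZR(4) unfolding low_def by simp
    ultimately have "X + smult (of_nat (p ^ t)) Z - X0 = 0" using low_mult_zero[OF D0] by metis
    then have "R = smult (of_nat (p ^ t)) R'"
      using \<open>R - _ = _\<close> by simp
    then show ?thesis using ZR by blast
  qed
  then have "coeff R n = 0" for n
    apply (intro Zinv_padic[OF b p])
    using XR(2) unfolding Zinv_poly_def apply blast
    by (metis coeff_smult)
  then have "R = 0" by (simp add: poly_eqI)
  then show ?thesis unfolding Zinv_dvd_def using XR by auto
qed




lemma smult_of_nat_conv: "smult (of_nat n) P = (of_nat n :: rat poly) * P"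
  by (simp add: of_nat_poly)

lemma binom_mod:
  assumes b: "b > 0" and l: "prime l" "odd l" and z: "Zinv_poly b z"
  shows "\<exists>w. Zinv_poly b w \<and> (1 - z) ^ l = 1 - z ^ l + smult (of_nat l) w"
proof -
  define w where "w = (\<Sum>k\<in>{1..l-1}. of_nat ((l choose k) div l) * (- z) ^ k)"
  have l1: "l > 1" using l prime_gt_1_nat by blast
  have wZ: "Zinv_poly b w" unfolding w_def using z
    by (intro Zinv_poly_sum b Zinv_poly_mult Zinv_poly_power Zinv_poly_uminus) auto
  have "(1 - z) ^ l = ((- z) + 1) ^ l" by simp
  also have "\<dots> = (\<Sum>k\<le>l. of_nat (l choose k) * (- z) ^ k)"
    unfolding binomial_ring by simp
  also have "{..l} = insert 0 (insert l {1..l-1})" using l1 by auto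
  also have "(\<Sum>k\<in>insert 0 (insert l {1..l-1}). of_nat (l choose k) * (- z) ^ k)
     = 1 + ((- z) ^ l + (\<Sum>k\<in>{1..l-1}. of_nat (l choose k) * (- z) ^ k))"
    using l1 by (subst sum.insert; simp)+
  also have "(\<Sum>k\<in>{1..l-1}. of_nat (l choose k) * (- z) ^ k) = of_nat l * w"
    unfolding w_def sum_distrib_left
  proof (intro sum.cong refl)
    fix k assume k: "k \<in> {1..l-1}"
    have "l dvd (l choose k)" using k l1 by (intro dvd_choose_prime l) auto
    then have "(l choose k) = l * ((l choose k) div l)" by simp
    then have "(of_nat (l choose k) :: rat poly) = of_nat l * of_nat ((l choose k) div l)"
      by (metis of_nat_mult)
    then show "of_nat (l choose k) * (- z) ^ k = of_nat l * (of_nat ((l choose k) div l) * (- z) ^ k)"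
      by (simp add: mult.assoc)
  qed
  also have "(- z) ^ l = - (z ^ l)" using l(2) by simp
  finally have "(1 - z) ^ l = 1 - z ^ l + smult (of_nat l) w"
    by (simp add: smult_of_nat_conv)
  then show ?thesis using wZ by blast
qed




lemma pow_cong:
  assumes b: "b > 0" and a: "Zinv_poly b a" and u: "Zinv_poly b u"
  shows "\<exists>v. Zinv_poly b v \<and> (a + smult (of_nat l) u) ^ n = a ^ n + smult (of_nat l) v"
proof (induction n)
  case 0 then show ?case by (intro exI[of _ 0]) auto
next
  case (Suc n)
  then obtain v where v: "Zinv_poly b v" "(a + smult (of_nat l) u) ^ n = a ^ n + smult (of_nat l) v" by blast
  have "(a + smult (of_nat l) u) ^ Suc n = a ^ Suc n + smult (of_nat l) (u * a ^ n + a * v + smult (of_nat l) (u * v))"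
    using v(2) by (simp add: algebra_simps smult_add_right)
  moreover have "Zinv_poly b (u * a ^ n + a * v + smult (of_nat l) (u * v))"
    using a u v(1) by (intro Zp b) auto
  ultimately show ?case by blast
qed





lemma ideal_pow:
  assumes b: "b > 0" and a: "Zinv_poly b a" and c: "Zinv_poly b c"
  shows "\<exists>X Y. Zinv_poly b X \<and> Zinv_poly b Y \<and> (a + c) ^ (e + t) = a ^ e * X + c ^ (t + 1) * Y"
proof (induction t arbitrary: e)
  case 0
  show ?case
  proof (induction e)
    case 0 then show ?case by (intro exI[of _ 1] exI[of _ 0]) auto
  next
    case (Suc e)
    then obtain X Y where XY: "Zinv_poly b X" "Zinv_poly b Y" "(a + c) ^ (e + 0) = a ^ e * X + c ^ (0 + 1) * Y" by blast
    have "(a + c) ^ (Suc e + 0) = (a + c) * (a + c) ^ (e + 0)" by simp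
    also have "\<dots> = a ^ Suc e * X + c ^ (0 + 1) * (a ^ e * X + (a + c) * Y)"
      unfolding XY(3) by (simp add: distrib_left distrib_right mult.assoc mult.left_commute)
    finally have "(a + c) ^ (Suc e + 0) = a ^ Suc e * X + c ^ (0 + 1) * (a ^ e * X + (a + c) * Y)" .
    moreover have "Zinv_poly b (a ^ e * X + (a + c) * Y)"
      using XY a c b by (intro Zinv_poly_add Zinv_poly_mult Zinv_poly_power) auto
    ultimately show ?case using XY(1) by blast
  qed
next
  case (Suc t)
  note outer = Suc.IH
  show ?case
  proof (induction e)
    case 0
    have "Zinv_poly b ((a + c) ^ Suc t)"
      using a c b by (intro Zinv_poly_add Zinv_poly_power) auto
    then show ?case by (intro exI[of _ "(a + c) ^ Suc t"] exI[of _ 0]) auto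
  next
    case (Suc e)
    then obtain X Y where XY: "Zinv_poly b X" "Zinv_poly b Y" "(a + c) ^ (e + Suc t) = a ^ e * X + c ^ (Suc t + 1) * Y" by blast
    obtain X' Y' where XY': "Zinv_poly b X'" "Zinv_poly b Y'" "(a + c) ^ (Suc e + t) = a ^ Suc e * X' + c ^ (t + 1) * Y'"
      using outer by blast
    have "(a + c) ^ (Suc e + Suc t) = (a + c) ^ (e + Suc t) * a + (a + c) ^ (Suc e + t) * c"
    proof -
      have "(a + c) ^ (Suc e + Suc t) = (a + c) ^ (e + Suc t) * (a + c)"
        by (metis add_Suc add_Suc_right power_Suc2)
      moreover have "(a + c) ^ (Suc e + t) = (a + c) ^ (e + Suc t)" by (metis add_Suc add_Suc_right)
      ultimately show ?thesis by (simp only: distrib_left)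
    qed
    also have "\<dots> = a ^ Suc e * (X + X' * c) + c ^ (Suc t + 1) * (Y * a + Y')"
      unfolding XY(3) XY'(3) by (simp add: distrib_left distrib_right mult.assoc mult.commute mult.left_commute)
    finally have "(a + c) ^ (Suc e + Suc t) = a ^ Suc e * (X + X' * c) + c ^ (Suc t + 1) * (Y * a + Y')" .
    moreover have "Zinv_poly b (X + X' * c)" "Zinv_poly b (Y * a + Y')"
      using XY XY' a c b by (intro Zinv_poly_add Zinv_poly_mult; simp)+
    ultimately show ?case by blast
  qed
qed




abbreviation Ec :: "rat poly \<Rightarrow> complex poly" where "Ec P \<equiv> map_poly of_rat P"

lemma Ec_add[simp]: "Ec (P + Q) = Ec P + Ec Q"
  by (intro poly_eqI) (simp add: coeff_map_poly of_rat_add)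
lemma Ec_diff[simp]: "Ec (P - Q) = Ec P - Ec Q"
  by (intro poly_eqI) (simp add: coeff_map_poly of_rat_diff)
lemma Ec_uminus[simp]: "Ec (- P) = - Ec P"
  by (intro poly_eqI) (simp add: coeff_map_poly of_rat_minus)
lemma Ec_mult[simp]: "Ec (P * Q) = Ec P * Ec Q"
  by (intro poly_eqI) (simp add: coeff_map_poly coeff_mult of_rat_sum of_rat_mult)
lemma Ec_1[simp]: "Ec 1 = 1" by simp
lemma Ec_monom[simp]: "Ec (monom c n) = monom (of_rat c) n" by (simp add: map_poly_monom)
lemma Ec_smult[simp]: "Ec (smult c P) = smult (of_rat c) (Ec P)"
  by (intro poly_eqI) (simp add: coeff_map_poly of_rat_mult)
lemma Ec_power[simp]: "Ec (P ^ n) = Ec P ^ n" by (induction n) auto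
lemma Ec_prod[simp]: "Ec (prod f I) = (\<Prod>i\<in>I. Ec (f i))"
  by (induction I rule: infinite_finite_induct) auto
lemma Ec_sum[simp]: "Ec (sum f I) = (\<Sum>i\<in>I. Ec (f i))"
  by (induction I rule: infinite_finite_induct) auto
lemma Ec_eq0[simp]: "Ec P = 0 \<longleftrightarrow> P = 0"
  by (simp add: map_poly_eq_0_iff)
lemma Ec_degree[simp]: "degree (Ec P) = degree P"
  by (simp add: degree_map_poly)

lemma Ec_dvd:
  assumes "Ec P dvd Ec Q" shows "P dvd Q"
proof (cases "P = 0")
  case True then show ?thesis using assms by simp
next
  case False
  have eq: "Q = P * (Q div P) + Q mod P" by simp
  then have "Ec Q = Ec P * Ec (Q div P) + Ec (Q mod P)" by (metis Ec_add Ec_mult)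
  then have "Ec P dvd Ec (Q mod P)" using assms by (metis dvd_add_right_iff dvd_triv_left)
  moreover have "Q mod P = 0 \<or> degree (Q mod P) < degree P" using False degree_mod_less by blast
  ultimately have "Q mod P = 0"
    by (metis Ec_degree Ec_eq0 dvd_imp_degree_le leD)
  then show ?thesis by (simp add: mod_eq_0_iff_dvd)
qed

lemma roots_prod_dvd:
  fixes H :: "complex poly"
  assumes "finite S" "\<forall>z\<in>S. poly H z = 0"
  shows "(\<Prod>z\<in>S. [:-z, 1:]) dvd H"
  using assms
proof (induction S arbitrary: H rule: finite_induct)
  case empty then show ?case by simp
next
  case (insert a S)
  have "poly H a = 0" using insert.prems by simp
  then obtain H' where H': "H = [:-a, 1:] * H'" by (metis dvd_def poly_eq_0_iff_dvd)
  have "\<forall>z\<in>S. poly H' z = 0"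
  proof
    fix z assume z: "z \<in> S"
    then have "z \<noteq> a" using insert.hyps by auto
    moreover have "poly H z = 0" using z insert.prems by simp
    ultimately show "poly H' z = 0" unfolding H' by simp
  qed
  then have "(\<Prod>z\<in>S. [:-z, 1:]) dvd H'" using insert.IH by blast
  then show ?case unfolding H' by (simp only: prod.insert[OF insert.hyps]) (rule mult_dvd_mono[OF dvd_refl])
qed

lemma rsq_dvd:
  fixes W H :: "complex poly"
  assumes W: "rsquarefree W" and roots: "\<forall>z. poly W z = 0 \<longrightarrow> poly H z = 0"
  shows "W dvd H"
proof -
  have W0: "W \<noteq> 0" using W unfolding rsquarefree_def by simp
  have fin: "finite {z. poly W z = 0}" using W0 poly_roots_finite by blast
  have "(\<Prod>z|poly W z = 0. [:-z, 1:]) dvd H" using roots_prod_dvd[OF fin] roots by simp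
  then have "smult (lead_coeff W) (\<Prod>z|poly W z = 0. [:-z, 1:]) dvd H"
    using W0 by (simp add: smult_dvd_iff)
  then show ?thesis using complex_poly_decompose_rsquarefree[OF W] by simp
qed

lemma rsq_xM:
  assumes "M > 0"
  shows "rsquarefree (1 - monom (1::complex) M)"
  unfolding rsquarefree_roots
proof (intro allI notI)
  fix z :: complex assume h: "poly (1 - monom 1 M) z = 0 \<and> poly (pderiv (1 - monom 1 M)) z = 0"
  then have "z ^ M = 1" by (simp add: poly_monom)
  then have "z \<noteq> 0" using assms by (cases M) auto
  moreover have "poly (pderiv (1 - monom 1 M)) z = - of_nat M * z ^ (M - 1)"
    by (simp add: pderiv_diff pderiv_monom poly_monom)
  ultimately show False using h assms by simp
qed

lemma rsq_dvd_sub: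
  assumes "rsquarefree V" "W dvd V" shows "rsquarefree W"
proof -
  have V0: "V \<noteq> 0" using assms(1) rsquarefree_def by blast
  then have W0: "W \<noteq> 0" using assms(2) by auto
  have "order a W \<le> order a V" for a using dvd_imp_order_le[OF V0 assms(2)] .
  then show ?thesis using assms(1) W0 unfolding rsquarefree_def
    by (metis le_0_eq le_SucE One_nat_def)
qed




lemma Zdvd_add: "b > 0 \<Longrightarrow> Zinv_dvd b D P \<Longrightarrow> Zinv_dvd b D Q \<Longrightarrow> Zinv_dvd b D (P + Q)"
  unfolding Zinv_dvd_def by (metis Zinv_poly_add distrib_left)
lemma Zdvd_diff: "b > 0 \<Longrightarrow> Zinv_dvd b D P \<Longrightarrow> Zinv_dvd b D Q \<Longrightarrow> Zinv_dvd b D (P - Q)"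
  unfolding Zinv_dvd_def by (metis Zinv_poly_diff right_diff_distrib)
lemma Zdvd_trans: "b > 0 \<Longrightarrow> Zinv_dvd b D E \<Longrightarrow> Zinv_dvd b E P \<Longrightarrow> Zinv_dvd b D P"
  unfolding Zinv_dvd_def by (metis Zinv_poly_mult mult.assoc)
lemma Zdvd_mult: "b > 0 \<Longrightarrow> Zinv_dvd b D P \<Longrightarrow> Zinv_poly b Q \<Longrightarrow> Zinv_dvd b D (P * Q)"
  unfolding Zinv_dvd_def by (metis Zinv_poly_mult mult.assoc)
lemma Zdvd_dvd: "Zinv_dvd b D P \<Longrightarrow> D dvd P"
  unfolding Zinv_dvd_def by auto

lemma coeff0_poly: "coeff P 0 = poly P 0" by (simp add: poly_0_coeff_0)

lemma poly_monom0: "n > 0 \<Longrightarrow> poly (monom (1::'a::comm_ring_1) n) 0 = 0"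
  by (simp add: poly_monom zero_power)

lemma coeff0_1x: "n > 0 \<Longrightarrow> coeff ((1 - monom (1::rat) n) ^ e) 0 = 1"
  unfolding coeff0_poly by (simp add: poly_monom zero_power)

lemma qpoch_coeff0: "coeff (qpoch k) 0 = 1"
  unfolding coeff0_poly qpoch_def by (simp add: poly_prod poly_monom)

lemma x_dvd: "1 - monom (1::'a::comm_ring_1) a dvd 1 - monom 1 (a * k)"
proof -
  have "monom (1::'a) (a * k) = monom 1 a ^ k" by (simp add: monom_power)
  then show ?thesis by (simp add: one_diff_power_eq)
qed

lemma x_Z1: "Zinv_poly b (1 - monom 1 n)"
proof -
  have "coeff (1 - monom (1::rat) n) i \<in> {0, 1, -1, 1 - 1}" for i
    by (auto simp add: coeff_1 coeff_monom)
  moreover have "{0, 1, -1, 1 - 1} \<subseteq> Zinv b" by (auto intro: Zinv_uminus)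
  ultimately show ?thesis unfolding Zinv_poly_def by blast
qed
lemma x_Z: "Zinv_poly b (1 - monom 1 n)" "b > 0 \<Longrightarrow> Zinv_poly b ((1 - monom 1 n) ^ e)"
  using x_Z1 Zinv_poly_power by auto

lemma qpoch_mono:
  assumes b: "b > 0" and "N \<le> M" shows "Zinv_dvd b (qpoch N) (qpoch M)"
proof (rule const_dvd[OF b qpoch_Z[OF b] qpoch_coeff0 qpoch_Z[OF b]])
  show "qpoch N dvd qpoch M" unfolding qpoch_def using assms(2)
    by (intro prod_dvd_prod_subset) auto
qed

lemma compat_diff:
  assumes b: "b > 0" and h: "in_Rb b h" and "N \<le> M"
  shows "Zinv_dvd b (qpoch N) (h M - h N)"
  using assms(3)
proof (induction M rule: dec_induct)
  case base
  then show ?case unfolding Zinv_dvd_def by (intro exI[of _ 0]) simp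
next
  case (step m)
  have "Zinv_dvd b (qpoch N) (h (Suc m) - h m)"
    using Zdvd_trans[OF b qpoch_mono[OF b step.hyps(1)]] h unfolding in_Rb_def by blast
  then have "Zinv_dvd b (qpoch N) ((h (Suc m) - h m) + (h m - h N))"
    using step.IH Zdvd_add[OF b] by blast
  then show ?case by simp
qed

lemma in_Rb_diff:
  assumes b: "b > 0" and "in_Rb b f" "in_Rb b g" shows "in_Rb b (\<lambda>N. f N - g N)"
  unfolding in_Rb_def
proof (intro conjI allI)
  fix k
  show "Zinv_poly b (f k - g k)" using assms unfolding in_Rb_def by (auto intro: Zinv_poly_diff)
  have "Zinv_dvd b (qpoch k) ((f (Suc k) - f k) - (g (Suc k) - g k))"
    using assms unfolding in_Rb_def by (auto intro: Zdvd_diff)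
  then show "Zinv_dvd b (qpoch k) (f (Suc k) - g (Suc k) - (f k - g k))"
    by (simp add: algebra_simps)
qed

lemma xe_dvd_qpoch:
  assumes n: "odd n" and N: "N \<ge> n * e"
  shows "(1 - monom (1::rat) n) ^ e dvd qpoch N"
proof -
  define \<phi> where "\<phi> = (\<lambda>j. j * n + (n - 1) div 2)"
  have inj: "inj_on \<phi> {..<e}" unfolding \<phi>_def inj_on_def using n by (auto elim: oddE)
  have sub: "\<phi> ` {..<e} \<subseteq> {..<N}"
  proof
    fix i assume "i \<in> \<phi> ` {..<e}"
    then obtain j where j: "j < e" "i = j * n + (n - 1) div 2" unfolding \<phi>_def by auto
    have "j * n + (n - 1) div 2 < j * n + n" using n by (cases n) auto
    also have "j * n + n \<le> e * n" using j(1) by (metis Suc_leI add.commute mult_Suc mult_le_mono1)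
    finally show "i \<in> {..<N}" using j N by (simp add: mult.commute)
  qed
  have "(1 - monom (1::rat) n) ^ e = (\<Prod>j<e. 1 - monom 1 n)" by simp
  also have "\<dots> dvd (\<Prod>j<e. 1 - monom 1 (2 * \<phi> j + 1))"
  proof (intro prod_dvd_prod)
    fix j
    have "2 * \<phi> j + 1 = n * (2 * j + 1)" unfolding \<phi>_def using n by (auto elim!: oddE simp: algebra_simps)
    then show "1 - monom (1::rat) n dvd 1 - monom 1 (2 * \<phi> j + 1)" using x_dvd by metis
  qed
  also have "(\<Prod>j<e. 1 - monom 1 (2 * \<phi> j + 1)) = (\<Prod>i\<in>\<phi> ` {..<e}. 1 - monom (1::rat) (2 * i + 1))"
    using prod.reindex[OF inj, of "\<lambda>i. 1 - monom (1::rat) (2 * i + 1)"] by (simp add: o_def)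
  also have "\<dots> dvd qpoch N" unfolding qpoch_def using sub by (intro prod_dvd_prod_subset) auto
  finally show ?thesis .
qed

lemma xe_Zdvd_qpoch:
  assumes b: "b > 0" and n: "odd n" and N: "N \<ge> n * e"
  shows "Zinv_dvd b ((1 - monom 1 n) ^ e) (qpoch N)"
  using const_dvd[OF b x_Z(2)[OF b] coeff0_1x qpoch_Z[OF b] xe_dvd_qpoch[OF n N]] n
  by (cases n) auto




lemma poly_Ec_qpoch: "poly (Ec (qpoch K)) \<xi> = (\<Prod>i<K. 1 - \<xi> ^ (2 * i + 1))"
  unfolding qpoch_def by (simp add: poly_prod poly_monom)

lemma poly_Ec_Zdvd:
  assumes "Zinv_dvd b D P" "poly (Ec D) \<xi> = 0" shows "poly (Ec P) \<xi> = 0"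
  using assms unfolding Zinv_dvd_def by auto

lemma vanish:
  assumes b: "b > 0" and f: "in_Rb b f" and g: "in_Rb b g" and podd: "odd p"
    and hyp: "\<forall>\<xi> m. root_of_unity_order \<xi> m \<and> m \<in> Tset b p \<longrightarrow> ev \<xi> m f = ev \<xi> m g"
    and ord: "root_of_unity_order \<xi> m" "m \<in> Tset b p" and mN: "m < 2 * N"
  shows "poly (Ec (f N - g N)) \<xi> = 0"
proof -
  define h where "h = (\<lambda>N. f N - g N)"
  have h: "in_Rb b h" unfolding h_def by (rule in_Rb_diff[OF b f g])
  have hm: "poly (Ec (h m)) \<xi> = 0" using hyp ord unfolding h_def ev_def by auto
  define K where "K = min N m"
  have xm: "\<xi> ^ m = 1" using ord(1) unfolding root_of_unity_order_def by auto
  have "odd m" using ord(2) podd unfolding Tset_def by auto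
  then obtain i where i: "m = 2 * i + 1" by (auto elim: oddE)
  have "i < K" unfolding K_def using i mN by auto
  then have qK: "poly (Ec (qpoch K)) \<xi> = 0" unfolding poly_Ec_qpoch
    using xm i by (auto intro!: prod_zero)
  have "poly (Ec (h N - h K)) \<xi> = 0"
    by (rule poly_Ec_Zdvd[OF compat_diff[OF b h] qK]) (simp add: K_def)
  moreover have "poly (Ec (h m - h K)) \<xi> = 0"
    by (rule poly_Ec_Zdvd[OF compat_diff[OF b h] qK]) (simp add: K_def)
  ultimately have "poly (Ec (h N)) \<xi> = 0" using hm by simp
  then show ?thesis unfolding h_def .
qed

definition G :: "nat \<Rightarrow> rat poly \<Rightarrow> rat poly" where "G p z = (\<Sum>k<p. z ^ k)"

lemma G_Z: "b > 0 \<Longrightarrow> Zinv_poly b z \<Longrightarrow> Zinv_poly b (G p z)"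
  unfolding G_def by (intro Zinv_poly_sum Zinv_poly_power) auto

lemma G_mul: "(1 - z) * G p z = 1 - z ^ p"
  unfolding G_def by (simp add: one_diff_power_eq)

lemma G_mod:
  assumes b: "b > 0" and p: "prime p" "odd p" and m: "m > 0"
  shows "\<exists>u. Zinv_poly b u \<and> G p (monom 1 m) = (1 - monom 1 m) ^ (p - 1) + smult (of_nat p) u"
proof -
  define z where "z = (monom 1 m :: rat poly)"
  obtain w where w: "Zinv_poly b w" "(1 - z) ^ p = 1 - z ^ p + smult (of_nat p) w"
    using binom_mod[OF b p] Zinv_poly_monom unfolding z_def by blast
  have p1: "p \<ge> 1" using prime_gt_1_nat[OF p(1)] by simp
  have pp: "(1 - z) ^ p = (1 - z) * (1 - z) ^ (p - 1)"
    using p1 by (metis power_eq_if not_one_le_zero)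
  have eq: "smult (of_nat p) w = (1 - z) * ((1 - z) ^ (p - 1) - G p z)"
    using w(2) G_mul[of z p] pp by (simp add: algebra_simps)
  then have "(1 - z) dvd smult (of_nat p) w" by simp
  then have "(1 - z) dvd w" using p1 by (simp add: dvd_smult_cancel)
  then have "Zinv_dvd b (1 - z) w"
    using const_dvd[OF b x_Z1 _ w(1)] coeff0_1x[OF m, of 1] unfolding z_def by simp
  then obtain u where u: "Zinv_poly b u" "w = (1 - z) * u" unfolding Zinv_dvd_def by blast
  have "(1 - z) * ((1 - z) ^ (p - 1) - G p z) = (1 - z) * smult (of_nat p) u"
    by (simp only: mult_smult_right u(2)[symmetric] eq)
  moreover have "1 - z \<noteq> 0"
  proof
    assume "1 - z = 0"
    then have "coeff (1 - z) 0 = 0" by simp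
    then show False using coeff0_1x[OF m, of 1] unfolding z_def by simp
  qed
  ultimately have "(1 - z) ^ (p - 1) - G p z = smult (of_nat p) u" using mult_left_cancel by blast
  then have "G p z = (1 - z) ^ (p - 1) + smult (of_nat p) (- u)" by (simp add: algebra_simps)
  then show ?thesis using u(1) Zinv_poly_uminus unfolding z_def by blast
qed

definition W :: "nat \<Rightarrow> nat \<Rightarrow> nat \<Rightarrow> rat poly" where
  "W p c j = (\<Prod>i<j. G p (monom 1 (c * p ^ i)))"

lemma W_mul: "(1 - monom 1 c) * W p c j = 1 - monom 1 (c * p ^ j)"
proof (induction j)
  case 0 then show ?case by (simp add: W_def)
next
  case (Suc j)
  have "(1 - monom 1 c) * W p c (Suc j) = ((1 - monom 1 c) * W p c j) * G p (monom 1 (c * p ^ j))"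
    by (simp add: W_def mult_ac)
  also have "\<dots> = 1 - monom 1 (c * p ^ j) ^ p" unfolding Suc.IH G_mul ..
  also have "\<dots> = 1 - monom 1 (c * p ^ Suc j)" by (simp add: monom_power mult_ac)
  finally show ?case .
qed

lemma W_Z: "b > 0 \<Longrightarrow> Zinv_poly b (W p c j)"
  unfolding W_def by (intro Zinv_poly_prod G_Z) auto

lemma sum_zero_pow: "p > 0 \<Longrightarrow> (\<Sum>k<p. (0::'a::comm_ring_1) ^ k) = 1"
proof (cases p)
  case (Suc n)
  show ?thesis unfolding Suc by (subst sum.lessThan_Suc_shift) simp
qed simp

lemma W_coeff0:
  assumes "c > 0" "p > 0" shows "coeff (W p c j) 0 = 1"
  unfolding coeff0_poly W_def G_def using assms
  by (simp add: poly_prod poly_sum poly_monom zero_power sum_zero_pow)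




lemma frob_iter:
  assumes b: "b > 0" and p: "prime p" "odd p"
  shows "\<exists>v. Zinv_poly b v \<and> (1 - monom 1 c) ^ (p ^ i) = 1 - monom 1 (c * p ^ i) + smult (of_nat p) v"
proof (induction i)
  case 0 then show ?case by (intro exI[of _ 0]) simp
next
  case (Suc i)
  then obtain v where v: "Zinv_poly b v" "(1 - monom 1 c) ^ (p ^ i) = 1 - monom 1 (c * p ^ i) + smult (of_nat p) v"
    by blast
  obtain v' where v': "Zinv_poly b v'"
    "(1 - monom 1 (c * p ^ i) + smult (of_nat p) v) ^ p = (1 - monom 1 (c * p ^ i)) ^ p + smult (of_nat p) v'"
    using pow_cong[OF b x_Z1 v(1)] by blast
  obtain w where w: "Zinv_poly b w" "(1 - monom 1 (c * p ^ i)) ^ p = 1 - monom 1 (c * p ^ i) ^ p + smult (of_nat p) w"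
    using binom_mod[OF b p Zinv_poly_monom] by blast
  have "(1 - monom 1 c) ^ (p ^ Suc i) = ((1 - monom 1 c) ^ (p ^ i)) ^ p"
    by (simp add: power_mult[symmetric] mult.commute)
  also have "\<dots> = 1 - monom 1 (c * p ^ Suc i) + smult (of_nat p) (w + v')"
    unfolding v(2) v'(2) w(2) by (simp add: monom_power mult_ac smult_add_right)
  finally show ?case using v'(1) w(1) Zinv_poly_add[OF b] by blast
qed

lemma pow_ge: "p \<ge> 2 \<Longrightarrow> i < (p::nat) ^ i"
  using less_exp[of i] power_mono[of 2 p i] by linarith

lemma G_at:
  assumes b: "b > 0" and p: "prime p" "odd p" and c: "c > 0" and ie: "i \<ge> e"
  shows "\<exists>X Y. Zinv_poly b X \<and> Zinv_poly b Y \<and>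
    G p (monom 1 (c * p ^ i)) = (1 - monom 1 c) ^ e * X + smult (of_nat p) Y"
proof -
  have p2: "p \<ge> 2" using prime_ge_2_nat[OF p(1)] .
  have pos: "0 < c * p ^ i" using c p2 by simp
  obtain u where u: "Zinv_poly b u" "G p (monom 1 (c * p ^ i)) = (1 - monom 1 (c * p ^ i)) ^ (p - 1) + smult (of_nat p) u"
    using G_mod[OF b p pos] by blast
  obtain v where v: "Zinv_poly b v" "(1 - monom 1 c) ^ (p ^ i) = 1 - monom 1 (c * p ^ i) + smult (of_nat p) v"
    using frob_iter[OF b p] by blast
  have "1 - monom 1 (c * p ^ i) = (1 - monom 1 c) ^ (p ^ i) + smult (of_nat p) (- v)"
    using v(2) by simp
  then obtain v' where v': "Zinv_poly b v'"
    "(1 - monom 1 (c * p ^ i)) ^ (p - 1) = ((1 - monom 1 c) ^ (p ^ i)) ^ (p - 1) + smult (of_nat p) v'"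
    using pow_cong[OF b x_Z(2)[OF b] Zinv_poly_uminus[OF v(1)]] by metis
  have ge: "p ^ i * (p - 1) \<ge> e"
  proof -
    have "e \<le> p ^ i" using pow_ge[OF p2, of i] ie by simp
    also have "\<dots> \<le> p ^ i * (p - 1)" using p2 by simp
    finally show ?thesis .
  qed
  have "((1 - monom (1::rat) c) ^ (p ^ i)) ^ (p - 1) = (1 - monom 1 c) ^ e * (1 - monom 1 c) ^ (p ^ i * (p - 1) - e)"
    using ge by (simp add: power_mult[symmetric] power_add[symmetric])
  then have "G p (monom 1 (c * p ^ i)) = (1 - monom 1 c) ^ e * (1 - monom 1 c) ^ (p ^ i * (p - 1) - e) + smult (of_nat p) (v' + u)"
    using u(2) v'(2) by (simp add: smult_add_right)
  then show ?thesis using x_Z(2)[OF b] Zinv_poly_add[OF b v'(1) u(1)] by blast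
qed

lemma W_mod:
  assumes b: "b > 0" and p: "prime p" "odd p" and c: "c > 0"
  shows "\<exists>X Y. Zinv_poly b X \<and> Zinv_poly b Y \<and>
    W p c (e + t) = (1 - monom 1 c) ^ e * X + smult (of_nat (p ^ t)) Y"
proof (induction t)
  case 0 then show ?case using W_Z[OF b] by (intro exI[of _ 0] exI[of _ "W p c e"]) auto
next
  case (Suc t)
  define D where "D = (1 - monom (1::rat) c) ^ e"
  obtain X Y where XY: "Zinv_poly b X" "Zinv_poly b Y" "W p c (e + t) = D * X + smult (of_nat (p ^ t)) Y"
    using Suc.IH unfolding D_def by blast
  obtain X' Y' where XY': "Zinv_poly b X'" "Zinv_poly b Y'" "G p (monom 1 (c * p ^ (e + t))) = D * X' + smult (of_nat p) Y'"
    using G_at[OF b p c, of e "e + t"] unfolding D_def by auto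
  have "W p c (e + Suc t) = W p c (e + t) * G p (monom 1 (c * p ^ (e + t)))"
    by (simp add: W_def)
  also have "\<dots> = D * (X * (D * X' + smult (of_nat p) Y') + smult (of_nat (p ^ t)) (Y * X')) + smult (of_nat (p ^ Suc t)) (Y * Y')"
    unfolding XY(3) XY'(3) by (simp add: algebra_simps smult_add_right mult_smult_right)
  finally have eq: "W p c (e + Suc t) = D * (X * (D * X' + smult (of_nat p) Y') + smult (of_nat (p ^ t)) (Y * X')) + smult (of_nat (p ^ Suc t)) (Y * Y')" .
  have DZ: "Zinv_poly b D" unfolding D_def by (rule x_Z(2)[OF b])
  have "Zinv_poly b (X * (D * X' + smult (of_nat p) Y') + smult (of_nat (p ^ t)) (Y * X'))"
    using XY XY' DZ b by (intro Zinv_poly_add Zinv_poly_mult Zinv_poly_smult_nat) auto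
  moreover have "Zinv_poly b (Y * Y')" using XY XY' b by (intro Zinv_poly_mult)
  ultimately show ?case using eq unfolding D_def by blast
qed

lemma W_roots:
  assumes c: "c > 0" and p: "p > 0" and r: "poly (Ec (W p c j)) \<zeta> = 0"
  shows "\<zeta> ^ (c * p ^ j) = 1" "\<zeta> ^ c \<noteq> 1"
proof -
  have "poly (Ec ((1 - monom 1 c) * W p c j)) \<zeta> = poly (Ec (1 - monom 1 (c * p ^ j))) \<zeta>"
    by (simp only: W_mul)
  then show "\<zeta> ^ (c * p ^ j) = 1" using r by (simp add: poly_monom)
  show "\<zeta> ^ c \<noteq> 1"
  proof
    assume z: "\<zeta> ^ c = 1"
    have "poly (Ec (W p c j)) \<zeta> = (\<Prod>i<j. \<Sum>k<p. ((\<zeta> ^ c) ^ (p ^ i)) ^ k)"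
      unfolding W_def G_def by (simp add: poly_prod poly_sum poly_monom power_mult)
    also have "\<dots> = of_nat p ^ j" using z by simp
    finally show False using r p by simp
  qed
qed

lemma W_rsq:
  assumes c: "c > 0" and p: "p > 0" shows "rsquarefree (Ec (W p c j))"
proof (rule rsq_dvd_sub[OF rsq_xM])
  show "0 < c * p ^ j" using c p by simp
  have "Ec (1 - monom 1 (c * p ^ j)) = Ec (1 - monom 1 c) * Ec (W p c j)" by (simp only: W_mul Ec_mult[symmetric])
  then show "Ec (W p c j) dvd 1 - monom 1 (c * p ^ j)" by simp
qed




lemma order_T:
  fixes \<zeta> :: complex
  assumes p: "prime p" and c: "c > 0" "odd c" "c dvd b ^ K" "\<not> p dvd c"
    and z1: "\<zeta> ^ (c * p ^ j) = 1" and z2: "\<zeta> ^ c \<noteq> 1"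
  shows "\<exists>m. root_of_unity_order \<zeta> m \<and> m \<in> Tset b p \<and> m \<le> c * p ^ j"
proof -
  define M where "M = c * p ^ j"
  have M0: "M > 0" unfolding M_def using c p by (simp add: prime_gt_0_nat)
  define m where "m = (LEAST m. 0 < m \<and> \<zeta> ^ m = 1)"
  have ex: "0 < M \<and> \<zeta> ^ M = 1" using M0 z1 unfolding M_def by simp
  have m: "0 < m \<and> \<zeta> ^ m = 1" unfolding m_def by (rule LeastI[of "\<lambda>m. 0 < m \<and> \<zeta> ^ m = 1" M, OF ex])
  have mmin: "\<not> (0 < k \<and> \<zeta> ^ k = 1)" if "k < m" for k using not_less_Least[OF that[unfolded m_def]] m_def by simp
  have ord: "root_of_unity_order \<zeta> m" unfolding root_of_unity_order_def using m mmin by blast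
  have dvd_of: "m dvd n" if "\<zeta> ^ n = 1" for n
  proof -
    have "\<zeta> ^ n = \<zeta> ^ (m * (n div m) + n mod m)" by simp
    also have "\<dots> = (\<zeta> ^ m) ^ (n div m) * \<zeta> ^ (n mod m)" by (simp only: power_add power_mult)
    finally have "\<zeta> ^ n = (\<zeta> ^ m) ^ (n div m) * \<zeta> ^ (n mod m)" .
    then have "\<zeta> ^ (n mod m) = 1" using m that by simp
    moreover have "n mod m < m" using m by simp
    ultimately have "n mod m = 0" using mmin[of "n mod m"] by auto
    then show ?thesis by (simp add: mod_eq_0_iff_dvd)
  qed
  have mM: "m dvd M" unfolding M_def by (rule dvd_of[OF z1])
  have mc: "\<not> m dvd c"
  proof
    assume "m dvd c"
    then obtain r where r: "c = m * r" by (rule dvdE)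
    have "\<zeta> ^ c = (\<zeta> ^ m) ^ r" unfolding r by (rule power_mult)
    then have "\<zeta> ^ c = 1" using m by simp
    then show False using z2 by simp
  qed
  define k where "k = multiplicity p m"
  define b' where "b' = m div p ^ k"
  have pk: "p ^ k dvd m" unfolding k_def by (rule multiplicity_dvd)
  have mdec: "m = p ^ k * b'" unfolding b'_def using pk by simp
  have npb: "\<not> p dvd b'" unfolding b'_def k_def
    using m p by (intro multiplicity_decompose) (auto simp: prime_gt_1_nat)
  have "coprime (p ^ j) b'" using prime_imp_coprime_nat[OF p npb] by simp
  then have cop: "coprime b' (p ^ j)" by (simp only: coprime_commute)
  have "b' dvd m" using mdec by simp
  then have "b' dvd c * p ^ j" using mM unfolding M_def by (rule dvd_trans)
  then have b'c: "b' dvd c" using cop by (simp add: coprime_dvd_mult_left_iff)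
  have k0: "k \<ge> 1"
  proof (rule ccontr)
    assume "\<not> k \<ge> 1" then have "k = 0" by simp
    then have "m = b'" using mdec by simp
    then show False using mc b'c by simp
  qed
  have "b' > 0" using m mdec by (simp add: nat_0_less_mult_iff)
  moreover have "odd b'" using b'c c(2) dvd_trans by blast
  moreover have "b' dvd b ^ K" using b'c c(3) by (rule dvd_trans)
  ultimately have "m \<in> Tset b p" unfolding Tset_def using mdec k0 by blast
  moreover have "m \<le> c * p ^ j" using mM M0 unfolding M_def by (simp add: dvd_imp_le)
  ultimately show ?thesis using ord by blast
qed




lemma lc_x:
  assumes n: "n > 0" shows "lead_coeff ((1 - monom (1::rat) n) ^ e) = 1 \<or> lead_coeff ((1 - monom (1::rat) n) ^ e) = -1"
proof -
  have c: "coeff (1 - monom (1::rat) n) n = -1" using n by (simp add: coeff_1 coeff_monom)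
  have "degree (1 - monom (1::rat) n) \<le> n"
    by (rule degree_le) (auto simp: coeff_1 coeff_monom)
  moreover have "n \<le> degree (1 - monom (1::rat) n)" using c by (intro le_degree) simp
  ultimately have "degree (1 - monom (1::rat) n) = n" by simp
  then have "lead_coeff (1 - monom (1::rat) n) = -1" using c by simp
  then show ?thesis by (simp add: lead_coeff_power minus_one_power_iff)
qed

definition Pn :: "nat \<Rightarrow> (nat \<Rightarrow> rat poly) \<Rightarrow> nat \<Rightarrow> bool" where
  "Pn b h n \<longleftrightarrow> (\<forall>e. \<exists>N0. \<forall>N\<ge>N0. Zinv_dvd b ((1 - monom 1 n) ^ e) (h N))"

lemma base_step:
  assumes b: "b > 0" and p: "prime p" "odd p" "\<not> p dvd b"
    and f: "in_Rb b f" and g: "in_Rb b g"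
    and hyp: "\<forall>\<xi> m. root_of_unity_order \<xi> m \<and> m \<in> Tset b p \<longrightarrow> ev \<xi> m f = ev \<xi> m g"
    and c: "c > 0" "odd c" "c dvd b ^ K"
  shows "Pn b (\<lambda>N. f N - g N) c"
  unfolding Pn_def
proof
  fix e
  define h where "h = (\<lambda>N. f N - g N)"
  have h: "in_Rb b h" unfolding h_def by (rule in_Rb_diff[OF b f g])
  have hZ: "Zinv_poly b (h N)" for N using h unfolding in_Rb_def by blast
  define D where "D = (1 - monom (1::rat) c) ^ e"
  have DZ: "Zinv_poly b D" unfolding D_def by (rule x_Z(2)[OF b])
  have Dlc: "lead_coeff D = 1 \<or> lead_coeff D = -1" unfolding D_def by (rule lc_x[OF c(1)])
  have pc: "\<not> p dvd c"
  proof
    assume "p dvd c"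
    then have "p dvd b ^ K" using c(3) by (rule dvd_trans)
    then have "p dvd b" using p(1) prime_dvd_power by blast
    then show False using p(3) by simp
  qed
  have p0: "p > 0" using p(1) prime_gt_0_nat by blast
  have "Zinv_dvd b D (h N)" if N: "N \<ge> c * e" for N
  proof (rule separation[OF b p(1) p(3) DZ Dlc hZ])
    fix t
    obtain X Y where XY: "Zinv_poly b X" "Zinv_poly b Y" "W p c (e + t) = D * X + smult (of_nat (p ^ t)) Y"
      using W_mod[OF b p(1,2) c(1), of e t] unfolding D_def by blast
    define j where "j = e + t"
    define N2 where "N2 = max N (c * p ^ j)"
    have cpj: "c * p ^ j < 2 * N2"
    proof -
      have "c * p ^ j > 0" using c p0 by simp
      then show ?thesis unfolding N2_def by linarith
    qed
    have roots: "poly (Ec (h N2)) \<zeta> = 0" if z: "poly (Ec (W p c j)) \<zeta> = 0" for \<zeta>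
    proof -
      have z1: "\<zeta> ^ (c * p ^ j) = 1" and z2: "\<zeta> ^ c \<noteq> 1" using W_roots[OF c(1) p0 z] by auto
      obtain m where m: "root_of_unity_order \<zeta> m" "m \<in> Tset b p" "m \<le> c * p ^ j"
        using order_T[OF p(1) c pc z1 z2] by blast
      have "m < 2 * N2" using m(3) cpj by linarith
      then show ?thesis unfolding h_def using vanish[OF b f g p(2) hyp m(1,2)] by blast
    qed
    have "Ec (W p c j) dvd Ec (h N2)" by (rule rsq_dvd[OF W_rsq[OF c(1) p0]]) (use roots in blast)
    then have "W p c j dvd h N2" by (rule Ec_dvd)
    then have "Zinv_dvd b (W p c j) (h N2)"
      by (rule const_dvd[OF b W_Z[OF b] W_coeff0[OF c(1) p0] hZ])
    then obtain H where H: "Zinv_poly b H" "h N2 = W p c j * H" unfolding Zinv_dvd_def by blast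
    have "Zinv_dvd b (qpoch N) (h N2 - h N)" using compat_diff[OF b h] N2_def by simp
    then have "Zinv_dvd b D (h N2 - h N)"
      using Zdvd_trans[OF b xe_Zdvd_qpoch[OF b c(2) N]] unfolding D_def by blast
    then obtain K where K: "Zinv_poly b K" "h N2 - h N = D * K" unfolding Zinv_dvd_def by blast
    have "h N = h N2 - D * K" using K(2) by (simp add: algebra_simps)
    also have "\<dots> = W p c (e + t) * H - D * K" using H(2) unfolding j_def by simp
    also have "\<dots> = D * (X * H - K) + smult (of_nat (p ^ t)) (Y * H)"
      unfolding XY(3) by (simp add: algebra_simps)
    finally have "h N = D * (X * H - K) + smult (of_nat (p ^ t)) (Y * H)" .
    moreover have "Zinv_poly b (X * H - K)" using XY H K b by (intro Zinv_poly_diff Zinv_poly_mult) auto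
    moreover have "Zinv_poly b (Y * H)" using XY H b by (intro Zinv_poly_mult) auto
    ultimately show "\<exists>X Y. Zinv_poly b X \<and> Zinv_poly b Y \<and> h N = D * X + smult (of_nat (p ^ t)) Y"
      by blast
  qed
  then show "\<exists>N0. \<forall>N\<ge>N0. Zinv_dvd b ((1 - monom 1 c) ^ e) (f N - g N)"
    unfolding D_def h_def by blast
qed




lemma prop_step:
  assumes b: "b > 0" and l: "prime l" "odd l" "\<not> l dvd b" and h: "in_Rb b h"
    and n: "odd n" and P: "Pn b h n"
  shows "Pn b h (n * l)"
  unfolding Pn_def
proof
  fix e
  have hZ: "Zinv_poly b (h N)" for N using h unfolding in_Rb_def by blast
  have n0: "n > 0" using n by (cases n) auto
  have l0: "l > 0" using l(1) prime_gt_0_nat by blast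
  have nl: "odd (n * l)" using n l(2) by simp
  define D where "D = (1 - monom (1::rat) (n * l)) ^ e"
  have DZ: "Zinv_poly b D" unfolding D_def by (rule x_Z(2)[OF b])
  have Dlc: "lead_coeff D = 1 \<or> lead_coeff D = -1" unfolding D_def by (rule lc_x) (use n0 l0 in simp)
  obtain w where w: "Zinv_poly b w" "(1 - monom 1 n) ^ l = 1 - monom 1 n ^ l + smult (of_nat l) w"
    using binom_mod[OF b l(1,2) Zinv_poly_monom] by blast
  have w': "(1 - monom (1::rat) n) ^ l = (1 - monom 1 (n * l)) + smult (of_nat l) w"
    using w(2) by (simp add: monom_power)
  have "Zinv_dvd b D (h N)" if N: "N \<ge> n * l * e" for N
  proof (rule separation[OF b l(1) l(3) DZ Dlc hZ])
    fix t
    obtain X Y where XY: "Zinv_poly b X" "Zinv_poly b Y"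
      "((1 - monom 1 (n * l)) + smult (of_nat l) w) ^ (e + t) = (1 - monom 1 (n * l)) ^ e * X + (smult (of_nat l) w) ^ (t + 1) * Y"
      using ideal_pow[OF b x_Z1 Zinv_poly_smult_nat[OF w(1)], of "n * l" l e t] by blast
    obtain N1 where N1: "\<forall>N\<ge>N1. Zinv_dvd b ((1 - monom 1 n) ^ (l * (e + t))) (h N)"
      using P unfolding Pn_def by blast
    define N2 where "N2 = max N N1"
    have "Zinv_dvd b ((1 - monom 1 n) ^ (l * (e + t))) (h N2)" using N1 unfolding N2_def by simp
    then obtain H where H: "Zinv_poly b H" "h N2 = (1 - monom 1 n) ^ (l * (e + t)) * H"
      unfolding Zinv_dvd_def by blast
    have "Zinv_dvd b (qpoch N) (h N2 - h N)" using compat_diff[OF b h] N2_def by simp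
    then have "Zinv_dvd b D (h N2 - h N)"
      using Zdvd_trans[OF b xe_Zdvd_qpoch[OF b nl N]] unfolding D_def by blast
    then obtain K where K: "Zinv_poly b K" "h N2 - h N = D * K" unfolding Zinv_dvd_def by blast
    have pw: "(1 - monom (1::rat) n) ^ (l * (e + t)) = D * X + smult (of_nat (l ^ t)) (smult (of_nat l) (w ^ (t + 1)) * Y)"
      unfolding power_mult w' XY(3) D_def by (simp add: smult_power mult_smult_left)
    have "h N = h N2 - D * K" using K(2) by (simp add: algebra_simps)
    also have "\<dots> = (1 - monom 1 n) ^ (l * (e + t)) * H - D * K" using H(2) by simp
    also have "\<dots> = D * (X * H - K) + smult (of_nat (l ^ t)) (smult (of_nat l) (w ^ (t + 1)) * Y * H)"
      unfolding pw by (simp add: algebra_simps)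
    finally have "h N = D * (X * H - K) + smult (of_nat (l ^ t)) (smult (of_nat l) (w ^ (t + 1)) * Y * H)" .
    moreover have "Zinv_poly b (X * H - K)" using XY H K b by (intro Zinv_poly_diff Zinv_poly_mult) auto
    moreover have "Zinv_poly b (smult (of_nat l) (w ^ (t + 1)) * Y * H)"
      using XY H w b by (intro Zinv_poly_mult Zinv_poly_smult_nat Zinv_poly_power) auto
    ultimately show "\<exists>X Y. Zinv_poly b X \<and> Zinv_poly b Y \<and> h N = D * X + smult (of_nat (l ^ t)) Y"
      by blast
  qed
  then show "\<exists>N0. \<forall>N\<ge>N0. Zinv_dvd b ((1 - monom 1 (n * l)) ^ e) (h N)"
    unfolding D_def by blast
qed

lemma dvd_pow_of_primes:
  assumes "\<forall>q. prime q \<longrightarrow> q dvd n \<longrightarrow> q dvd b" "n > 0"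
  shows "n dvd b ^ n"
  using assms
proof (induction n rule: less_induct)
  case (less n)
  show ?case
  proof (cases "n = 1")
    case True then show ?thesis by simp
  next
    case False
    then obtain q where q: "prime q" "q dvd n" using prime_factor_nat[of n] by blast
    then obtain NP where NP: "n = q * NP" by blast
    have q1: "q > 1" using q(1) prime_gt_1_nat by blast
    have NP0: "NP > 0" using less.prems NP by (cases NP) auto
    have lt: "NP < n" using NP q1 NP0 by simp
    have "\<forall>r. prime r \<longrightarrow> r dvd NP \<longrightarrow> r dvd b"
    proof (intro allI impI)
      fix r assume r: "prime r" "r dvd NP"
      then have "r dvd n" unfolding NP by simp
      then show "r dvd b" using less.prems(1) r(1) by blast
    qed
    then have "NP dvd b ^ NP" using less.IH[OF lt] NP0 by blast
    have "q dvd b" using less.prems q by blast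
    then have "q * NP dvd b * b ^ NP" using \<open>NP dvd b ^ NP\<close> by (rule mult_dvd_mono)
    moreover have "b * b ^ NP dvd b ^ n"
    proof -
      have "Suc NP \<le> n" using lt by simp
      then have "b ^ Suc NP dvd b ^ n" by (rule le_imp_power_dvd)
      then show ?thesis by simp
    qed
    ultimately have "q * NP dvd b ^ n" by (rule dvd_trans)
    then show ?thesis unfolding NP .
  qed
qed

lemma all_odd:
  assumes b: "b > 0" and p: "prime p" "odd p" "\<not> p dvd b"
    and f: "in_Rb b f" and g: "in_Rb b g"
    and hyp: "\<forall>\<xi> m. root_of_unity_order \<xi> m \<and> m \<in> Tset b p \<longrightarrow> ev \<xi> m f = ev \<xi> m g"
  shows "odd n \<Longrightarrow> Pn b (\<lambda>N. f N - g N) n"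
proof (induction n rule: less_induct)
  case (less n)
  have h: "in_Rb b (\<lambda>N. f N - g N)" by (rule in_Rb_diff[OF b f g])
  have n0: "n > 0" using less.prems by (cases n) auto
  show ?case
  proof (cases "\<exists>l. prime l \<and> l dvd n \<and> \<not> l dvd b")
    case True
    then obtain l where l: "prime l" "l dvd n" "\<not> l dvd b" by blast
    from l(2) obtain M where "n = l * M" by (rule dvdE)
    then have nM: "n = M * l" by (simp add: mult.commute)
    have l1: "l > 1" using l(1) prime_gt_1_nat by blast
    have lodd: "odd l" using l(2) less.prems dvd_trans[of 2 l n] by auto
    have Modd: "odd M" using less.prems nM by simp
    have M0: "M > 0" using n0 nM by (cases M) auto
    have "M < n" using nM l1 M0 by simp
    then have "Pn b (\<lambda>N. f N - g N) M" using less.IH[of M] Modd by simp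
    then show ?thesis unfolding nM by (rule prop_step[OF b l(1) lodd l(3) h Modd])
  next
    case False
    then have "n dvd b ^ n" using n0 by (intro dvd_pow_of_primes) auto
    then show ?thesis by (rule base_step[OF b p f g hyp n0 less.prems])
  qed
qed




lemma odd_L: "odd (\<Prod>i<k. 2 * i + 1 :: nat)"
  by (induction k) auto

theorem proposition2:
  fixes b p :: nat and f g :: "nat \<Rightarrow> rat poly"
  assumes "b > 0" and "prime p" and "odd p" and "\<not> p dvd b"
    and "in_Rb b f" and "in_Rb b g"
    and "\<forall>\<xi> m. root_of_unity_order \<xi> m \<and> m \<in> Tset b p \<longrightarrow> ev \<xi> m f = ev \<xi> m g"
  shows "Rb_eq b f g"
  unfolding Rb_eq_def
proof
  fix k
  note b = assms(1)
  define h where "h = (\<lambda>N. f N - g N)"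
  have h: "in_Rb b h" unfolding h_def by (rule in_Rb_diff[OF b assms(5,6)])
  have hZ: "Zinv_poly b (h N)" for N using h unfolding in_Rb_def by blast
  define L where "L = (\<Prod>i<k. 2 * i + 1 :: nat)"
  have "Pn b h L" unfolding h_def L_def by (rule all_odd[OF assms odd_L])
  then obtain N0 where N0: "\<forall>N\<ge>N0. Zinv_dvd b ((1 - monom 1 L) ^ k) (h N)" unfolding Pn_def by blast
  define N where "N = max N0 k"
  have "Zinv_dvd b ((1 - monom 1 L) ^ k) (h N)" using N0 unfolding N_def by simp
  then have d1: "(1 - monom 1 L) ^ k dvd h N" by (rule Zdvd_dvd)
  have "qpoch k dvd (\<Prod>i<k. 1 - monom (1::rat) L)" unfolding qpoch_def
  proof (rule prod_dvd_prod)
    fix i assume i: "i \<in> {..<k}"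
    have "2 * i + 1 dvd L" unfolding L_def using i by (intro dvd_prodI) auto
    then obtain r where r: "L = (2 * i + 1) * r" by (rule dvdE)
    show "1 - monom (1::rat) (2 * i + 1) dvd 1 - monom 1 L" unfolding r by (rule x_dvd)
  qed
  then have "qpoch k dvd (1 - monom 1 L) ^ k" by simp
  then have d2: "qpoch k dvd h N" using d1 by (rule dvd_trans)
  have "qpoch k dvd h N - h k" using compat_diff[OF b h, of k N] unfolding N_def
    by (intro Zdvd_dvd) simp
  with d2 have "qpoch k dvd h N - (h N - h k)" by (rule dvd_diff)
  then have "qpoch k dvd h k" by simp
  then have "Zinv_dvd b (qpoch k) (h k)"
    by (rule const_dvd[OF b qpoch_Z[OF b] qpoch_coeff0 hZ])
  then show "Zinv_dvd b (qpoch k) (f k - g k)" unfolding h_def .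
qed



end
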